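(* Let $\theta\in(0,\pi)$ and let $z$ be a real number with $z>-\csc(\theta)$. Suppose real numbers $\lambda_1,\lambda_2,\lambda_3$ satisfy \[ \lambda_1\lambda_2\lambda_3=\csc^2(\theta)\,(\lambda_1+\lambda_2+\lambda_3+2z),\qquad \lambda_i>0\ \ (i=1,2,3),\qquad \lambda_i\lambda_j>\csc^2(\theta)\ \ (i\ne j). \] Then $g:=\sum_{i<j}\lambda_i\lambda_j+2z\sum_i\lambda_i+3z^2>0$. *)

theory Defs
  imports Complex_Main
begin

definition csc :: "real \<Rightarrow> real" where
  "csc x = 1 / sin x"

end

theory Submission
  imports Defs
begin

lemma key:
  fixes x1 x2 x3 w :: real
  assumes h: "x1 * x2 * x3 = x1 + x2 + x3 + 2 * w"
    and "x2 * x3 > 1" and "w > -1" and "w < 0"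
  shows "x1 * x2 + x1 * x3 + x2 * x3 + 2 * w * (x1 + x2 + x3) + 3 * w^2 > 0"
proof -
  let ?u = "x2 * x3" and ?t = "x2 + x3"
  have x1: "x1 * (?u - 1) = ?t + 2 * w" using h by (simp add: algebra_simps)
  have "(?u - 1) * (x1 * x2 + x1 * x3 + x2 * x3 + 2 * w * (x1 + x2 + x3) + 3 * w^2)
        = (x1 * (?u - 1)) * (?t + 2*w) + (?u - 1) * (?u + 2*w*?t + 3*w^2)"
    by (simp add: algebra_simps power2_eq_square)
  also have "\<dots> = (?t + w * (?u + 1))^2 + ?u * (?u - 1) * (1 - w^2)"
    unfolding x1 by (simp add: algebra_simps power2_eq_square)
  also have "\<dots> > 0"
  proof -
    have "1 - w^2 = (1 - w) * (1 + w)" by (simp add: algebra_simps power2_eq_square)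
    also have "\<dots> > 0" using assms(3,4) by (intro mult_pos_pos) auto
    finally have "1 - w^2 > 0" .
    moreover have "?u > 0" "?u - 1 > 0" using assms(2) by auto
    ultimately have "?u * (?u - 1) * (1 - w^2) > 0" using mult_pos_pos by metis
    thus ?thesis by (intro add_nonneg_pos) auto
  qed
  finally show ?thesis using assms(2) by (simp add: zero_less_mult_iff)
qed

theorem lemma3p5:
  fixes \<theta> z l1 l2 l3 :: real
  assumes "0 < \<theta>" and "\<theta> < pi"
    and "z > - csc \<theta>"
    and "l1 * l2 * l3 = (csc \<theta>)^2 * (l1 + l2 + l3 + 2 * z)"
    and "l1 > 0" and "l2 > 0" and "l3 > 0"
    and "l1 * l2 > (csc \<theta>)^2" and "l1 * l3 > (csc \<theta>)^2" and "l2 * l3 > (csc \<theta>)^2"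
  shows "l1 * l2 + l1 * l3 + l2 * l3 + 2 * z * (l1 + l2 + l3) + 3 * z^2 > 0"
proof (cases "z \<ge> 0")
  case True
  have "l1 * l2 > 0" using assms(5,6) by simp
  moreover have "l1 * l3 > 0" "l2 * l3 > 0" using assms(5,6,7) by simp_all
  moreover have "z * (l1 + l2 + l3) \<ge> 0" using True assms(5,6,7) by (intro mult_nonneg_nonneg) auto
  moreover have "z^2 \<ge> 0" by (rule zero_le_power2)
  ultimately show ?thesis by linarith
next
  case False
  define c where "c = csc \<theta>"
  have "sin \<theta> > 0" using assms(1,2) sin_gt_zero by blast
  hence c: "c > 0" unfolding c_def csc_def by simp
  define x1 where "x1 = l1 / c"
  define x2 where "x2 = l2 / c"
  define x3 where "x3 = l3 / c"
  define w where "w = z / c"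
  have l: "l1 = c * x1" "l2 = c * x2" "l3 = c * x3" "z = c * w"
    using c by (simp_all add: x1_def x2_def x3_def w_def)
  have "c^3 * (x1 * x2 * x3) = c^3 * (x1 + x2 + x3 + 2 * w)"
    using assms(4) unfolding l c_def[symmetric] by (simp add: algebra_simps power2_eq_square power3_eq_cube)
  hence h: "x1 * x2 * x3 = x1 + x2 + x3 + 2 * w" using c by simp
  have "c^2 * (x2 * x3) > c^2 * 1" using assms(10) unfolding l c_def[symmetric]
    by (simp add: algebra_simps power2_eq_square)
  hence u: "x2 * x3 > 1" using c by (simp add: mult_less_cancel_left)
  have "c * w > c * (-1)" using assms(3) unfolding l c_def[symmetric] by simp
  hence w1: "w > -1" using c mult_less_cancel_left_pos by metis
  have w0: "w < 0" using False c l(4) by (simp add: zero_le_mult_iff) 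
  have k: "x1 * x2 + x1 * x3 + x2 * x3 + 2 * w * (x1 + x2 + x3) + 3 * w^2 > 0"
    using key[OF h u w1 w0] .
  have "l1 * l2 + l1 * l3 + l2 * l3 + 2 * z * (l1 + l2 + l3) + 3 * z^2
     = c^2 * (x1 * x2 + x1 * x3 + x2 * x3 + 2 * w * (x1 + x2 + x3) + 3 * w^2)"
    unfolding l by (simp add: algebra_simps power2_eq_square)
  thus ?thesis using k c by simp
qed

end
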